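(* Let $f:[0,1]^n \to \mathbb{R}_+$ be a differentiable DR-submodular function and $\vec{x}^* \in [0,1]^n$ a maximizer of $f$. Consider a differentiable trajectory $(\vec{x}^{(t)},\vec{y}^{(t)})$ with $\vec{x}^{(t)} \le \vec{y}^{(t)}$ satisfying $\dot{\vec{x}}^{(t)} = \nabla f(\vec{x}^{(t)})^+$ and $\dot{\vec{y}}^{(t)} = \nabla f(\vec{y}^{(t)})^-$. Let $\vec{p}^{(t)}$ be the projection of $\vec{x}^*$ onto the box $[\vec{x}^{(t)},\vec{y}^{(t)}]$, i.e. $p^{(t)}_i = \min\{\max\{x^*_i, x^{(t)}_i\}, y^{(t)}_i\}$. Then at every time $t$ (where the derivatives exist) $$\frac12\left(\langle \nabla f(\vec{x}^{(t)}), \dot{\vec{x}}^{(t)}\rangle + \langle \nabla f(\vec{y}^{(t)}), \dot{\vec{y}}^{(t)}\rangle\right) + \langle \nabla f(\vec{p}^{(t)}), \dot{\vec{p}}^{(t)}\rangle \ge 0.$$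
   Context: For a vector $\vec{v}$, $\vec{v}^+$ denotes the vector with entries $\max\{v_i,0\}$ and $\vec{v}^-$ the vector with entries $\min\{v_i,0\}$. A function $f:[0,1]^n \to \mathbb{R}_+$ is DR-submodular if for all $\vec{x}\le\vec{y}$ in $[0,1]^n$ (coordinate-wise), all $i\in[n]$ and $\delta\in[0,1]$ with $\vec{x}+\delta\vec{1}_{\{i\}}, \vec{y}+\delta\vec{1}_{\{i\}} \in [0,1]^n$, $f(\vec{x}+\delta\vec{1}_{\{i\}})-f(\vec{x}) \ge f(\vec{y}+\delta\vec{1}_{\{i\}})-f(\vec{y})$; for differentiable $f$ this is equivalent to $\nabla f(\vec{x}) \ge \nabla f(\vec{y})$ whenever $\vec{x}\le\vec{y}$. Dots denote time derivatives. *)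

theory Defs
  imports "HOL-Analysis.Analysis"
begin

definition unit_cube :: "(real ^ 'n) set" where
  "unit_cube = {x. \<forall>i. 0 \<le> x $ i \<and> x $ i \<le> 1}"

definition vpos :: "real ^ 'n \<Rightarrow> real ^ 'n" where
  "vpos v = (\<chi> i. max (v $ i) 0)"

definition vneg :: "real ^ 'n \<Rightarrow> real ^ 'n" where
  "vneg v = (\<chi> i. min (v $ i) 0)"

definition dr_submodular :: "(real ^ 'n \<Rightarrow> real) \<Rightarrow> bool" where
  "dr_submodular f \<longleftrightarrow>
     (\<forall>x y i \<delta>. x \<in> unit_cube \<and> y \<in> unit_cube \<and> x \<le> y \<and> 0 \<le> \<delta> \<and> \<delta> \<le> 1 \<and>
        x + \<delta> *\<^sub>R axis i 1 \<in> unit_cube \<and> y + \<delta> *\<^sub>R axis i 1 \<in> unit_cube \<longrightarrow>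
        f (x + \<delta> *\<^sub>R axis i 1) - f x \<ge> f (y + \<delta> *\<^sub>R axis i 1) - f y)"

definition box_proj :: "real ^ 'n \<Rightarrow> real ^ 'n \<Rightarrow> real ^ 'n \<Rightarrow> real ^ 'n" where
  "box_proj z x y = (\<chi> i. min (max (z $ i) (x $ i)) (y $ i))"

end

theory Submission
  imports Defs
begin

lemma clamp_q:
  fixes z l u l' u' h :: real
  assumes "h \<noteq> 0"
  shows "(min (max z l') u' - min (max z l) u) / h \<le> max (max ((l'-l)/h) ((u'-u)/h)) 0"
    and "min (min ((l'-l)/h) ((u'-u)/h)) 0 \<le> (min (max z l') u' - min (max z l) u) / h"
proof -
  have up: "min (max z l') u' - min (max z l) u \<le> max (max (l'-l) (u'-u)) 0" by linarith
  have lo: "min (min (l'-l) (u'-u)) 0 \<le> min (max z l') u' - min (max z l) u" by linarith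
  show "(min (max z l') u' - min (max z l) u) / h \<le> max (max ((l'-l)/h) ((u'-u)/h)) 0"
  proof (cases "h > 0")
    case True then show ?thesis using up
      by (auto simp: divide_right_mono max_def min_def divide_le_eq le_divide_eq)
  next
    case False then have "h < 0" using assms by simp
    then show ?thesis using lo
      by (auto simp: max_def min_def divide_le_eq le_divide_eq)
  qed
  show "min (min ((l'-l)/h) ((u'-u)/h)) 0 \<le> (min (max z l') u' - min (max z l) u) / h"
  proof (cases "h > 0")
    case True then show ?thesis using lo
      by (auto simp: max_def min_def divide_le_eq le_divide_eq)
  next
    case False then have "h < 0" using assms by simp
    then show ?thesis using up
      by (auto simp: max_def min_def divide_le_eq le_divide_eq)
  qed
qed

lemma clamp_deriv:
  fixes X Y :: "real \<Rightarrow> real"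
  assumes ab: "a < b" and t: "t \<in> {a..b}"
    and dX: "(X has_real_derivative X') (at t within {a..b})"
    and dY: "(Y has_real_derivative Y') (at t within {a..b})"
    and dP: "((\<lambda>s. min (max z (X s)) (Y s)) has_real_derivative P') (at t within {a..b})"
  shows "min (min X' Y') 0 \<le> P' \<and> P' \<le> max (max X' Y') 0"
proof -
  let ?F = "at t within {a..b}"
  have nt: "?F \<noteq> bot" using ab t by (simp add: trivial_limit_within)
  let ?qx = "\<lambda>s. (X s - X t) / (s - t)"
  let ?qy = "\<lambda>s. (Y s - Y t) / (s - t)"
  let ?qp = "\<lambda>s. (min (max z (X s)) (Y s) - min (max z (X t)) (Y t)) / (s - t)"
  have lx: "(?qx \<longlongrightarrow> X') ?F" using dX by (simp add: has_field_derivative_iff)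
  have ly: "(?qy \<longlongrightarrow> Y') ?F" using dY by (simp add: has_field_derivative_iff)
  have lp: "(?qp \<longlongrightarrow> P') ?F" using dP by (simp add: has_field_derivative_iff)
  have ev: "eventually (\<lambda>s. s \<noteq> t) ?F" by (simp add: eventually_at_filter)
  have e1: "eventually (\<lambda>s. ?qp s \<le> max (max (?qx s) (?qy s)) 0) ?F"
    using ev by eventually_elim (rule clamp_q(1), simp)
  have e2: "eventually (\<lambda>s. min (min (?qx s) (?qy s)) 0 \<le> ?qp s) ?F"
    using ev by eventually_elim (rule clamp_q(2), simp)
  have "P' \<le> max (max X' Y') 0"
    by (rule tendsto_le[OF nt _ lp e1]) (intro tendsto_intros lx ly)
  moreover have "min (min X' Y') 0 \<le> P'"
    by (rule tendsto_le[OF nt lp _ e2]) (intro tendsto_intros lx ly)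
  ultimately show ?thesis by simp
qed

lemma nonneg_deriv:
  fixes h :: "real \<Rightarrow> real"
  assumes e: "0 < e" and d: "(h has_real_derivative D) (at 0 within {0..e})"
    and ge: "\<forall>s\<in>{0..e}. h 0 \<le> h s"
  shows "0 \<le> D"
proof -
  let ?F = "at (0::real) within {0..e}"
  have nt: "?F \<noteq> bot" using e by (simp add: trivial_limit_within)
  have l: "((\<lambda>s. (h s - h 0) / (s - 0)) \<longlongrightarrow> D) ?F" using d by (simp add: has_field_derivative_iff)
  have "eventually (\<lambda>s. 0 \<le> (h s - h 0) / (s - 0)) ?F"
    unfolding eventually_at_filter using ge by (auto intro!: always_eventually)
  then show ?thesis by (rule tendsto_lowerbound[OF l _ nt])
qed

lemma line_deriv:
  fixes f :: "real ^ 'n \<Rightarrow> real"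
  assumes grad: "\<forall>z\<in>unit_cube. (f has_derivative (\<lambda>h. df z \<bullet> h)) (at z within unit_cube)"
    and z: "z \<in> unit_cube" and e0: "0 \<le> e" and line: "\<forall>s\<in>{0..e}. z + s *\<^sub>R v \<in> unit_cube"
  shows "((\<lambda>s. f (z + s *\<^sub>R v)) has_real_derivative (df z \<bullet> v)) (at 0 within {0..e})"
proof -
  have d1: "((\<lambda>s. z + s *\<^sub>R v) has_derivative (\<lambda>s. s *\<^sub>R v)) (at 0 within {0..e})"
    by (auto intro!: derivative_eq_intros)
  have "((\<lambda>s. f (z + s *\<^sub>R v)) has_derivative (\<lambda>s. df (z + 0 *\<^sub>R v) \<bullet> (s *\<^sub>R v))) (at 0 within {0..e})"
    by (rule has_derivative_in_compose2[where t=unit_cube and g=f and g'="\<lambda>z h. df z \<bullet> h", OF _ _ _ d1])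
      (use grad line z e0 in auto)
  moreover have "(*) (df z \<bullet> v) = (\<lambda>s. s * (df z \<bullet> v))" by (auto simp: fun_eq_iff)
  ultimately show ?thesis
    by (simp add: has_field_derivative_def)
qed

lemma grad_mono:
  fixes f :: "real ^ 'n \<Rightarrow> real"
  assumes grad: "\<forall>z\<in>unit_cube. (f has_derivative (\<lambda>h. df z \<bullet> h)) (at z within unit_cube)"
    and dr: "dr_submodular f"
    and x: "x \<in> unit_cube" and y: "y \<in> unit_cube" and xy: "x \<le> y"
  shows "df y $ i \<le> df x $ i"
proof -
  let ?e = "axis i (1::real)"
  have xi: "0 \<le> x $ i" "x $ i \<le> 1" and yi: "0 \<le> y $ i" "y $ i \<le> 1" and le: "x $ i \<le> y $ i"
    using x y xy by (auto simp: unit_cube_def less_eq_vec_def)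
  have drI: "f (u + d *\<^sub>R ?e) - f u \<ge> f (w + d *\<^sub>R ?e) - f w"
    if "u \<in> unit_cube" "w \<in> unit_cube" "u \<le> w" "0 \<le> d" "d \<le> 1"
      "u + d *\<^sub>R ?e \<in> unit_cube" "w + d *\<^sub>R ?e \<in> unit_cube" for u w d
    using dr that unfolding dr_submodular_def by blast
  have mem: "v + s *\<^sub>R c *\<^sub>R ?e \<in> unit_cube"
    if "v \<in> unit_cube" "0 \<le> v $ i + s * c" "v $ i + s * c \<le> 1" for v s c
    using that by (auto simp: unit_cube_def axis_def)
  have le_sh: "u + s *\<^sub>R c *\<^sub>R ?e \<le> w + s *\<^sub>R d *\<^sub>R ?e"
    if "u \<le> w" "u $ i + s * c \<le> w $ i + s * d" for u w s c d
    using that by (auto simp: less_eq_vec_def axis_def)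
  have lineP: "\<forall>s\<in>{0..e}. v + s *\<^sub>R (1::real) *\<^sub>R ?e \<in> unit_cube"
    if v: "v \<in> unit_cube" and "0 \<le> e" "v $ i + e \<le> 1" for v e
  proof (intro ballI)
    fix s assume s: "s \<in> {0..e}"
    have "0 \<le> (v + s *\<^sub>R (1::real) *\<^sub>R ?e) $ j \<and> (v + s *\<^sub>R (1::real) *\<^sub>R ?e) $ j \<le> 1" for j
    proof (cases "j = i")
      case True
      have "0 \<le> v $ i" using v by (simp add: unit_cube_def)
      then show ?thesis using True s that by (simp add: axis_def)
    next
      case False then show ?thesis using v unfolding unit_cube_def by (simp add: axis_def)
    qed
    then show "v + s *\<^sub>R (1::real) *\<^sub>R ?e \<in> unit_cube" by (simp add: unit_cube_def)
  qed
  have lineM: "\<forall>s\<in>{0..e}. v + s *\<^sub>R (-1::real) *\<^sub>R ?e \<in> unit_cube"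
    if v: "v \<in> unit_cube" and "0 \<le> e" "0 \<le> v $ i - e" for v e
  proof (intro ballI)
    fix s assume s: "s \<in> {0..e}"
    have "0 \<le> (v + s *\<^sub>R (-1::real) *\<^sub>R ?e) $ j \<and> (v + s *\<^sub>R (-1::real) *\<^sub>R ?e) $ j \<le> 1" for j
    proof (cases "j = i")
      case True
      have "v $ i \<le> 1" using v by (simp add: unit_cube_def)
      then show ?thesis using True s that by (simp add: axis_def)
    next
      case False then show ?thesis using v unfolding unit_cube_def by (simp add: axis_def)
    qed
    then show "v + s *\<^sub>R (-1::real) *\<^sub>R ?e \<in> unit_cube" by (simp add: unit_cube_def)
  qed
  consider (A) "x $ i < y $ i" | (B) "x $ i = y $ i" "x $ i < 1" | (C) "x $ i = y $ i" "x $ i = 1"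
    using le xi by linarith
  then show ?thesis
  proof cases
    case A
    define e where "e = y $ i - x $ i"
    have e: "0 < e" "e \<le> 1" using A xi yi by (auto simp: e_def)
    have d1: "((\<lambda>s. f (x + s *\<^sub>R (1::real) *\<^sub>R ?e)) has_real_derivative (df x \<bullet> (1::real) *\<^sub>R ?e)) (at 0 within {0..e})"
      by (rule line_deriv[OF grad x]) (use e xi yi in \<open>auto simp: e_def intro!: mem[where c=1, simplified] x\<close>)
    have lineY: "\<forall>s\<in>{0..e}. y + s *\<^sub>R (-1::real) *\<^sub>R ?e \<in> unit_cube"
    proof (intro ballI)
      fix s assume s: "s \<in> {0..e}"
      have "0 \<le> (y + s *\<^sub>R (-1::real) *\<^sub>R ?e) $ j \<and> (y + s *\<^sub>R (-1::real) *\<^sub>R ?e) $ j \<le> 1" for j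
      proof (cases "j = i")
        case True then show ?thesis using s xi yi unfolding e_def by (simp add: axis_def)
      next
        case False then show ?thesis using y unfolding unit_cube_def by (simp add: axis_def)
      qed
      then show "y + s *\<^sub>R (-1::real) *\<^sub>R ?e \<in> unit_cube" by (simp add: unit_cube_def)
    qed
    have d2: "((\<lambda>s. f (y + s *\<^sub>R (-1::real) *\<^sub>R ?e)) has_real_derivative (df y \<bullet> (-1::real) *\<^sub>R ?e)) (at 0 within {0..e})"
      by (rule line_deriv[OF grad y]) (use e lineY in auto)
    have "0 \<le> df x \<bullet> (1::real) *\<^sub>R ?e + df y \<bullet> (-1::real) *\<^sub>R ?e"
    proof (rule nonneg_deriv[OF e(1) DERIV_add[OF d1 d2]], intro ballI)
      fix s assume s: "s \<in> {0..e}"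
      let ?w = "y + s *\<^sub>R (-1::real) *\<^sub>R ?e"
      have w: "?w \<in> unit_cube" using lineY s by blast
      have wy: "?w + s *\<^sub>R ?e = y" by (simp add: algebra_simps)
      have xw: "x \<le> ?w" unfolding less_eq_vec_def
      proof
        fix j show "x $ j \<le> ?w $ j"
        proof (cases "j = i")
          case True then show ?thesis using s unfolding e_def by (simp add: axis_def)
        next
          case False then show ?thesis using xy by (simp add: axis_def less_eq_vec_def)
        qed
      qed
      have xe: "x + s *\<^sub>R ?e \<in> unit_cube"
      proof -
        have "x $ i + s \<le> 1" "0 \<le> x $ i + s" using s yi xi unfolding e_def by auto
        then show ?thesis using mem[of x s 1] x by simp
      qed
      have "f (x + s *\<^sub>R ?e) - f x \<ge> f (?w + s *\<^sub>R ?e) - f ?w"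
        by (rule drI[OF x w xw]) (use s e xe wy y in auto)
      moreover note wy
      ultimately show "f (x + 0 *\<^sub>R (1::real) *\<^sub>R ?e) + f (y + 0 *\<^sub>R (-1::real) *\<^sub>R ?e)
          \<le> f (x + s *\<^sub>R (1::real) *\<^sub>R ?e) + f ?w" by simp
    qed
    then show ?thesis by (simp add: inner_axis)
  next
    case B
    define e where "e = 1 - x $ i"
    have e: "0 < e" "e \<le> 1" using B xi by (auto simp: e_def)
    have lx: "\<forall>s\<in>{0..e}. x + s *\<^sub>R (1::real) *\<^sub>R ?e \<in> unit_cube"
      by (rule lineP) (use x e in \<open>auto simp: e_def\<close>)
    have ly: "\<forall>s\<in>{0..e}. y + s *\<^sub>R (1::real) *\<^sub>R ?e \<in> unit_cube"
      by (rule lineP) (use y e B in \<open>auto simp: e_def\<close>)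
    have d1: "((\<lambda>s. f (x + s *\<^sub>R (1::real) *\<^sub>R ?e)) has_real_derivative (df x \<bullet> (1::real) *\<^sub>R ?e)) (at 0 within {0..e})"
      by (rule line_deriv[OF grad x]) (use e lx in auto)
    have d2: "((\<lambda>s. f (y + s *\<^sub>R (1::real) *\<^sub>R ?e)) has_real_derivative (df y \<bullet> (1::real) *\<^sub>R ?e)) (at 0 within {0..e})"
      by (rule line_deriv[OF grad y]) (use e ly in auto)
    have "0 \<le> df x \<bullet> (1::real) *\<^sub>R ?e - df y \<bullet> (1::real) *\<^sub>R ?e"
    proof (rule nonneg_deriv[OF e(1) DERIV_diff[OF d1 d2]], intro ballI)
      fix s assume s: "s \<in> {0..e}"
      have m1: "x + s *\<^sub>R ?e \<in> unit_cube" using lx s by auto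
      have m2: "y + s *\<^sub>R ?e \<in> unit_cube" using ly s by auto
      have "f (x + s *\<^sub>R ?e) - f x \<ge> f (y + s *\<^sub>R ?e) - f y"
        by (rule drI[OF x y xy _ _ m1 m2]) (use s e in auto)
      then show "f (x + 0 *\<^sub>R (1::real) *\<^sub>R ?e) - f (y + 0 *\<^sub>R (1::real) *\<^sub>R ?e)
          \<le> f (x + s *\<^sub>R (1::real) *\<^sub>R ?e) - f (y + s *\<^sub>R (1::real) *\<^sub>R ?e)" by simp
    qed
    then show ?thesis by (simp add: inner_axis)
  next
    case C
    define e where "e = (1::real)"
    have e: "0 < e" "e \<le> 1" by (auto simp: e_def)
    have lx: "\<forall>s\<in>{0..e}. x + s *\<^sub>R (-1::real) *\<^sub>R ?e \<in> unit_cube"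
      by (rule lineM) (use x e C in \<open>auto simp: e_def\<close>)
    have ly: "\<forall>s\<in>{0..e}. y + s *\<^sub>R (-1::real) *\<^sub>R ?e \<in> unit_cube"
      by (rule lineM) (use y e C in \<open>auto simp: e_def\<close>)
    have d1: "((\<lambda>s. f (x + s *\<^sub>R (-1::real) *\<^sub>R ?e)) has_real_derivative (df x \<bullet> (-1::real) *\<^sub>R ?e)) (at 0 within {0..e})"
      by (rule line_deriv[OF grad x]) (use e lx in auto)
    have d2: "((\<lambda>s. f (y + s *\<^sub>R (-1::real) *\<^sub>R ?e)) has_real_derivative (df y \<bullet> (-1::real) *\<^sub>R ?e)) (at 0 within {0..e})"
      by (rule line_deriv[OF grad y]) (use e ly in auto)
    have "0 \<le> df y \<bullet> (-1::real) *\<^sub>R ?e - df x \<bullet> (-1::real) *\<^sub>R ?e"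
    proof (rule nonneg_deriv[OF e(1) DERIV_diff[OF d2 d1]], intro ballI)
      fix s assume s: "s \<in> {0..e}"
      let ?u = "x + s *\<^sub>R (-1::real) *\<^sub>R ?e"
      let ?w = "y + s *\<^sub>R (-1::real) *\<^sub>R ?e"
      have u: "?u \<in> unit_cube" using lx s by blast
      have w: "?w \<in> unit_cube" using ly s by blast
      have uw: "?u \<le> ?w" by (rule le_sh[OF xy]) (use C in simp)
      have wy: "?w + s *\<^sub>R ?e = y" and ux: "?u + s *\<^sub>R ?e = x" by (simp_all add: algebra_simps)
      have "f (?u + s *\<^sub>R ?e) - f ?u \<ge> f (?w + s *\<^sub>R ?e) - f ?w"
        by (rule drI[OF u w uw]) (use s e_def wy ux x y in auto)
      then show "f (y + 0 *\<^sub>R (-1::real) *\<^sub>R ?e) - f (x + 0 *\<^sub>R (-1::real) *\<^sub>R ?e)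
          \<le> f ?w - f ?u" using wy ux by simp
    qed
    then show ?thesis by (simp add: inner_axis)
  qed
qed

lemma coord_arith:
  fixes gx gy gp P :: real
  assumes "gy \<le> gp" "gp \<le> gx"
    and "min (min (max gx 0) (min gy 0)) 0 \<le> P" "P \<le> max (max (max gx 0) (min gy 0)) 0"
  shows "0 \<le> (1/2) * (gx * max gx 0 + gy * min gy 0) + gp * P"
proof -
  define X where "X = max gx 0"
  define Y where "Y = min gy 0"
  have X: "0 \<le> X" "gx \<le> X" and Y: "Y \<le> 0" "Y \<le> gy" by (auto simp: X_def Y_def)
  have P: "Y \<le> P" "P \<le> X" using assms(3,4) X Y unfolding X_def[symmetric] Y_def[symmetric] by auto
  have sq: "gx * max gx 0 = X * X" "gy * min gy 0 = Y * Y" by (auto simp: X_def Y_def max_def min_def)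
  have "X * Y \<le> gp * P"
  proof (cases "gp \<ge> 0")
    case True
    have "gp * Y \<le> gp * P" using True P by (simp add: mult_left_mono)
    moreover have "gx * Y \<le> gp * Y" using assms(2) Y by (simp add: mult_right_mono_neg)
    moreover have "X * Y \<le> gx * Y" using X Y by (simp add: mult_right_mono_neg)
    ultimately show ?thesis by linarith
  next
    case False
    have "gp * X \<le> gp * P" using False P by (simp add: mult_left_mono_neg)
    moreover have "gy * X \<le> gp * X" using assms(1) X by (simp add: mult_right_mono)
    moreover have "Y * X \<le> gy * X" using X Y by (simp add: mult_right_mono)
    ultimately show ?thesis by (simp add: mult.commute)
  qed
  moreover have "0 \<le> (X + Y) * (X + Y)" by simp
  ultimately show ?thesis unfolding sq by (simp add: algebra_simps)
qed

theorem lemma5: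
  fixes f :: "real ^ 'n \<Rightarrow> real"
    and df :: "real ^ 'n \<Rightarrow> real ^ 'n"
    and xs :: "real ^ 'n"
    and x y :: "real \<Rightarrow> real ^ 'n"
    and a b t :: real
    and p' :: "real ^ 'n"
  assumes nonneg: "\<forall>z\<in>unit_cube. 0 \<le> f z"
    and grad: "\<forall>z\<in>unit_cube. (f has_derivative (\<lambda>h. df z \<bullet> h)) (at z within unit_cube)"
    and dr: "dr_submodular f"
    and xs_in: "xs \<in> unit_cube"
    and xs_max: "\<forall>z\<in>unit_cube. f z \<le> f xs"
    and ab: "a < b"
    and x_in: "\<forall>s\<in>{a..b}. x s \<in> unit_cube"
    and y_in: "\<forall>s\<in>{a..b}. y s \<in> unit_cube"
    and xy: "\<forall>s\<in>{a..b}. x s \<le> y s"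
    and x_ode: "\<forall>s\<in>{a..b}. (x has_vector_derivative vpos (df (x s))) (at s within {a..b})"
    and y_ode: "\<forall>s\<in>{a..b}. (y has_vector_derivative vneg (df (y s))) (at s within {a..b})"
    and t_in: "t \<in> {a..b}"
    and p_deriv: "((\<lambda>s. box_proj xs (x s) (y s)) has_vector_derivative p') (at t within {a..b})"
  shows "(1/2) * (df (x t) \<bullet> vpos (df (x t)) + df (y t) \<bullet> vneg (df (y t)))
           + df (box_proj xs (x t) (y t)) \<bullet> p' \<ge> 0"
proof -
  let ?p = "box_proj xs (x t) (y t)"
  have xt: "x t \<in> unit_cube" and yt: "y t \<in> unit_cube" and xyt: "x t \<le> y t"
    using x_in y_in xy t_in by auto
  have pc: "?p \<in> unit_cube" unfolding unit_cube_def
  proof (intro CollectI allI)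
    fix j
    have "0 \<le> x t $ j" "y t $ j \<le> 1" "x t $ j \<le> y t $ j"
      using xt yt xyt by (auto simp: unit_cube_def less_eq_vec_def)
    then show "0 \<le> ?p $ j \<and> ?p $ j \<le> 1" by (auto simp: box_proj_def min_def max_def)
  qed
  have xp: "x t \<le> ?p" and py: "?p \<le> y t" using xyt
    by (auto simp: box_proj_def less_eq_vec_def)
  have comp: "0 \<le> (1/2) * (df (x t) $ i * vpos (df (x t)) $ i + df (y t) $ i * vneg (df (y t)) $ i)
           + df ?p $ i * p' $ i" for i
  proof -
    have dX: "((\<lambda>s. x s $ i) has_real_derivative (vpos (df (x t)) $ i)) (at t within {a..b})"
      using bounded_linear.has_vector_derivative[OF bounded_linear_vec_nth x_ode[rule_format, OF t_in]]
      by (simp add: has_real_derivative_iff_has_vector_derivative)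
    have dY: "((\<lambda>s. y s $ i) has_real_derivative (vneg (df (y t)) $ i)) (at t within {a..b})"
      using bounded_linear.has_vector_derivative[OF bounded_linear_vec_nth y_ode[rule_format, OF t_in]]
      by (simp add: has_real_derivative_iff_has_vector_derivative)
    have dP: "((\<lambda>s. min (max (xs $ i) (x s $ i)) (y s $ i)) has_real_derivative (p' $ i)) (at t within {a..b})"
      using bounded_linear.has_vector_derivative[OF bounded_linear_vec_nth p_deriv]
      by (simp add: has_real_derivative_iff_has_vector_derivative box_proj_def)
    have b: "min (min (vpos (df (x t)) $ i) (vneg (df (y t)) $ i)) 0 \<le> p' $ i \<and>
             p' $ i \<le> max (max (vpos (df (x t)) $ i) (vneg (df (y t)) $ i)) 0"
      by (rule clamp_deriv[OF ab t_in dX dY dP])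
    have g1: "df (y t) $ i \<le> df ?p $ i" by (rule grad_mono[OF grad dr pc yt py])
    have g2: "df ?p $ i \<le> df (x t) $ i" by (rule grad_mono[OF grad dr xt pc xp])
    show ?thesis using coord_arith[OF g1 g2] b by (simp add: vpos_def vneg_def)
  qed
  have "(1/2) * (df (x t) \<bullet> vpos (df (x t)) + df (y t) \<bullet> vneg (df (y t)))
           + df ?p \<bullet> p' = (\<Sum>i\<in>UNIV. (1/2) * (df (x t) $ i * vpos (df (x t)) $ i + df (y t) $ i * vneg (df (y t)) $ i)
           + df ?p $ i * p' $ i)"
    by (simp add: inner_vec_def sum.distrib flip: sum_divide_distrib)
  also have "\<dots> \<ge> 0" by (rule sum_nonneg) (rule comp)
  finally show ?thesis .
qed

end
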